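(* Let $A,B\in\mathcal{K}_n$. Then $A$ is an endpoint on the line through $A$ and $B$ if and only if for every $\epsilon\in(0,1)$ the convex body $\epsilon B$ is not a summand of $A$.
   Context: A convex body is a closed, bounded, non-empty convex subset of $\mathbb{R}^n$; $\mathcal{K}_n$ is the set of convex bodies in $\mathbb{R}^n$ with Minkowski addition and nonnegative scaling. The support function of $A$ is $h_A(x)=\sup\{a\cdot x: a\in A\}$ and $\mathcal{H}=\{h_A:A\in\mathcal{K}_n\}$. The line through $A$ and $B$ is the set of $X\in\mathcal{K}_n$ with $h_X=(1-t)h_A+th_B$ for some $t\in\mathbb{R}$; $A$ is an endpoint on this line if there is no $t<0$ with $(1-t)h_A+th_B\in\mathcal{H}$ (i.e. the line contains no convex body on the opposite side of $A$ from $B$). For $K,L\in\mathcal{K}_n$, $L$ is a summand of $K$ if there is $M\in\mathcal{K}_n$ with $L+M=K$. *)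

theory Defs
  imports "HOL-Analysis.Analysis"
begin

definition convex_body :: "'a::euclidean_space set \<Rightarrow> bool" where
  "convex_body A \<longleftrightarrow> closed A \<and> bounded A \<and> A \<noteq> {} \<and> convex A"

definition support_fun :: "'a::euclidean_space set \<Rightarrow> 'a \<Rightarrow> real" where
  "support_fun A x = Sup ((\<lambda>a. a \<bullet> x) ` A)"

definition support_funs :: "('a::euclidean_space \<Rightarrow> real) set" where
  "support_funs = {support_fun A | A. convex_body A}"

definition minkowski_sum :: "'a::euclidean_space set \<Rightarrow> 'a set \<Rightarrow> 'a set" where
  "minkowski_sum A B = {a + b | a b. a \<in> A \<and> b \<in> B}"

definition is_summand :: "'a::euclidean_space set \<Rightarrow> 'a set \<Rightarrow> bool" where
  "is_summand L K \<longleftrightarrow> (\<exists>M. convex_body M \<and> minkowski_sum L M = K)"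

definition is_endpoint :: "'a::euclidean_space set \<Rightarrow> 'a set \<Rightarrow> bool" where
  "is_endpoint A B \<longleftrightarrow>
     \<not> (\<exists>t::real. t < 0 \<and>
          (\<lambda>x. (1 - t) * support_fun A x + t * support_fun B x) \<in> support_funs)"

end

theory Submission
  imports Defs
begin

lemma cb_compact: "convex_body A \<Longrightarrow> compact A"
  unfolding convex_body_def by (simp add: compact_eq_bounded_closed)

lemma bdd_img: "bounded A \<Longrightarrow> bdd_above ((\<lambda>a. a \<bullet> x) ` A)"
  by (intro bounded_imp_bdd_above bounded_linear_image bounded_linear_inner_left)

lemma cb_scale: "convex_body A \<Longrightarrow> c > 0 \<Longrightarrow> convex_body ((\<lambda>b. c *\<^sub>R b) ` A)"
  unfolding convex_body_def
  by (simp add: closed_scaling bounded_scaling convex_scaling)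

lemma cb_sum: "convex_body A \<Longrightarrow> convex_body B \<Longrightarrow> convex_body (minkowski_sum A B)"
proof -
  assume a: "convex_body A" "convex_body B"
  have c: "compact (minkowski_sum A B)" unfolding minkowski_sum_def
    using compact_sums cb_compact a by blast
  have e: "minkowski_sum A B = (\<Union>x\<in> A. \<Union>y \<in> B. {x + y})" unfolding minkowski_sum_def by auto
  have "convex (minkowski_sum A B)" unfolding e using a convex_sums convex_body_def by blast
  moreover have "minkowski_sum A B \<noteq> {}" using a unfolding convex_body_def minkowski_sum_def by auto
  ultimately show ?thesis using c unfolding convex_body_def by (simp add: compact_eq_bounded_closed)
qed

lemma sf_sum:
  assumes "convex_body A" "convex_body B"
  shows "support_fun (minkowski_sum A B) x = support_fun A x + support_fun B x"
proof -
  have bA: "bdd_above ((\<lambda>a. a \<bullet> x) ` A)" and bB: "bdd_above ((\<lambda>a. a \<bullet> x) ` B)"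
    and nA: "A \<noteq> {}" and nB: "B \<noteq> {}" using assms bdd_img[of A x] bdd_img[of B x] unfolding convex_body_def by auto
  have bS: "bdd_above ((\<lambda>a. a \<bullet> x) ` minkowski_sum A B)"
    using cb_sum[OF assms] bdd_img[of "minkowski_sum A B" x] unfolding convex_body_def by auto
  have nS: "minkowski_sum A B \<noteq> {}" using nA nB unfolding minkowski_sum_def by auto
  have le: "support_fun (minkowski_sum A B) x \<le> support_fun A x + support_fun B x"
    unfolding support_fun_def
  proof (rule cSup_least)
    show "(\<lambda>a. a \<bullet> x) ` minkowski_sum A B \<noteq> {}" using nS by auto
  next
    fix y assume "y \<in> (\<lambda>a. a \<bullet> x) ` minkowski_sum A B"
    then obtain a b where ab: "a \<in> A" "b \<in> B" "y = (a + b) \<bullet> x" unfolding minkowski_sum_def by auto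
    have "a \<bullet> x \<le> Sup ((\<lambda>a. a \<bullet> x) ` A)" by (rule cSUP_upper[OF ab(1) bA])
    moreover have "b \<bullet> x \<le> Sup ((\<lambda>a. a \<bullet> x) ` B)" by (rule cSUP_upper[OF ab(2) bB])
    ultimately show "y \<le> Sup ((\<lambda>a. a \<bullet> x) ` A) + Sup ((\<lambda>a. a \<bullet> x) ` B)"
      using ab by (simp add: inner_add_left)
  qed
  let ?S = "support_fun (minkowski_sum A B) x"
  have up: "a \<bullet> x + b \<bullet> x \<le> ?S" if "a \<in> A" "b \<in> B" for a b
  proof -
    have "a + b \<in> minkowski_sum A B" using that unfolding minkowski_sum_def by auto
    then have "(a + b) \<bullet> x \<le> ?S" unfolding support_fun_def by (rule cSUP_upper[OF _ bS])
    then show ?thesis by (simp add: inner_add_left)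
  qed
  have h1: "b \<bullet> x \<le> ?S - support_fun A x" if "b \<in> B" for b
  proof -
    have "support_fun A x \<le> ?S - b \<bullet> x" unfolding support_fun_def[of A]
      apply (rule cSup_least) apply (use nA in blast) apply clarify
      apply (drule up[OF _ that]) by linarith
    then show ?thesis by simp
  qed
  have "support_fun B x \<le> ?S - support_fun A x" unfolding support_fun_def[of B]
    apply (rule cSup_least) apply (use nB in blast) apply clarify
      apply (drule h1) by linarith
  then show ?thesis using le by simp
qed


lemma sf_scale:
  assumes "convex_body B" "c > 0"
  shows "support_fun ((\<lambda>b. c *\<^sub>R b) ` B) x = c * support_fun B x"
proof -
  have bB: "bdd_above ((\<lambda>a. a \<bullet> x) ` B)" and nB: "B \<noteq> {}"
    using assms bdd_img[of B x] unfolding convex_body_def by auto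
  have bS: "bdd_above ((\<lambda>a. a \<bullet> x) ` ((\<lambda>b. c *\<^sub>R b) ` B))"
    using cb_scale[OF assms] bdd_img[of "(\<lambda>b. c *\<^sub>R b) ` B" x] unfolding convex_body_def by auto
  let ?S = "support_fun ((\<lambda>b. c *\<^sub>R b) ` B) x"
  have up: "c * (b \<bullet> x) \<le> ?S" if "b \<in> B" for b
  proof -
    have "(c *\<^sub>R b) \<bullet> x \<le> ?S" unfolding support_fun_def
      by (rule cSUP_upper[OF _ bS]) (use that in blast)
    then show ?thesis by simp
  qed
  have le: "?S \<le> c * support_fun B x" unfolding support_fun_def[of "(\<lambda>b. c *\<^sub>R b) ` B"]
  proof (rule cSup_least)
    show "(\<lambda>a. a \<bullet> x) ` (\<lambda>b. c *\<^sub>R b) ` B \<noteq> {}" using nB by auto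
  next
    fix y assume "y \<in> (\<lambda>a. a \<bullet> x) ` (\<lambda>b. c *\<^sub>R b) ` B"
    then obtain b where b: "b \<in> B" "y = c * (b \<bullet> x)" by auto
    have "b \<bullet> x \<le> support_fun B x" unfolding support_fun_def by (rule cSUP_upper[OF b(1) bB])
    then show "y \<le> c * support_fun B x" using b assms(2) by simp
  qed
  have "support_fun B x \<le> ?S / c" unfolding support_fun_def[of B]
    apply (rule cSup_least) apply (use nB in blast) apply clarify
    apply (drule up) using assms(2) by (simp add: field_simps)
  then have "c * support_fun B x \<le> ?S" using assms(2) by (simp add: field_simps)
  then show ?thesis using le by simp
qed

lemma sf_unique:
  assumes "convex_body C" "convex_body D" "support_fun C = support_fun D"
  shows "C \<subseteq> D"
proof
  fix z assume z: "z \<in> C"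
  show "z \<in> D"
  proof (rule ccontr)
    assume "z \<notin> D"
    then obtain a b where ab: "a \<bullet> z < b" "\<forall>x\<in>D. b < a \<bullet> x"
      using separating_hyperplane_closed_point[of D z] assms(2) unfolding convex_body_def by blast
    have bC: "bdd_above ((\<lambda>y. y \<bullet> (-a)) ` C)" and nD: "D \<noteq> {}"
      using assms bdd_img[of C "-a"] unfolding convex_body_def by auto
    have "z \<bullet> (-a) \<le> support_fun C (-a)" unfolding support_fun_def by (rule cSUP_upper[OF z bC])
    moreover have "support_fun D (-a) \<le> - b" unfolding support_fun_def
      apply (rule cSup_least) using nD ab(2) by (auto simp: inner_commute less_imp_le)
    ultimately show False using ab(1) assms(3) by (simp add: inner_commute)
  qed
qed

theorem proposition3:
  fixes A B :: "'a::euclidean_space set"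
  assumes "convex_body A" and "convex_body B"
  shows "is_endpoint A B \<longleftrightarrow>
         (\<forall>\<epsilon>::real. 0 < \<epsilon> \<and> \<epsilon> < 1 \<longrightarrow> \<not> is_summand ((\<lambda>b. \<epsilon> *\<^sub>R b) ` B) A)"
proof
  assume E: "is_endpoint A B"
  show "\<forall>\<epsilon>::real. 0 < \<epsilon> \<and> \<epsilon> < 1 \<longrightarrow> \<not> is_summand ((\<lambda>b. \<epsilon> *\<^sub>R b) ` B) A"
  proof (intro allI impI notI)
    fix e :: real assume e: "0 < e \<and> e < 1" and "is_summand ((\<lambda>b. e *\<^sub>R b) ` B) A"
    then obtain M where M: "convex_body M" "minkowski_sum ((\<lambda>b. e *\<^sub>R b) ` B) M = A"
      unfolding is_summand_def by blast
    have hA: "support_fun A x = e * support_fun B x + support_fun M x" for x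
      using sf_sum[OF cb_scale[OF assms(2)] M(1), of e x] sf_scale[OF assms(2), of e x] e M(2) by simp
    define t where "t = - e / (1 - e)"
    have t: "t < 0" using e unfolding t_def by (simp add: field_simps)
    have "(\<lambda>x. (1 - t) * support_fun A x + t * support_fun B x)
          = support_fun ((\<lambda>b. (1 / (1 - e)) *\<^sub>R b) ` M)"
    proof
      fix x
      show "(1 - t) * support_fun A x + t * support_fun B x
          = support_fun ((\<lambda>b. (1 / (1 - e)) *\<^sub>R b) ` M) x"
      proof -
        have sx: "support_fun ((\<lambda>b. (1 / (1 - e)) *\<^sub>R b) ` M) x = support_fun M x / (1 - e)"
          using sf_scale[OF M(1), of "1 / (1 - e)" x] e by simp
        have ne: "1 - e \<noteq> 0" using e by simp
        have ne2: "1 + e*e - e*2 \<noteq> 0"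
        proof -
          have "1 + e*e - e*2 = (1-e)*(1-e)" by algebra
          then show ?thesis using ne by simp
        qed
        show ?thesis unfolding sx hA t_def using ne ne2 by (simp add: field_simps)
      qed
    qed
    moreover have "convex_body ((\<lambda>b. (1 / (1 - e)) *\<^sub>R b) ` M)"
      using cb_scale[OF M(1)] e by simp
    ultimately have "(\<lambda>x. (1 - t) * support_fun A x + t * support_fun B x) \<in> support_funs"
      unfolding support_funs_def by blast
    then show False using E t unfolding is_endpoint_def by blast
  qed
next
  assume S: "\<forall>\<epsilon>::real. 0 < \<epsilon> \<and> \<epsilon> < 1 \<longrightarrow> \<not> is_summand ((\<lambda>b. \<epsilon> *\<^sub>R b) ` B) A"
  show "is_endpoint A B"
    unfolding is_endpoint_def
  proof
    assume "\<exists>t::real. t < 0 \<and> (\<lambda>x. (1 - t) * support_fun A x + t * support_fun B x) \<in> support_funs"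
    then obtain t C where t: "t < 0" and C: "convex_body C"
      and hC: "support_fun C = (\<lambda>x. (1 - t) * support_fun A x + t * support_fun B x)"
      unfolding support_funs_def by auto
    define e where "e = - t / (1 - t)"
    have e: "0 < e" "e < 1" using t unfolding e_def by (auto simp: field_simps)
    define M where "M = (\<lambda>b. (1 / (1 - t)) *\<^sub>R b) ` C"
    have Mc: "convex_body M" unfolding M_def using cb_scale[OF C] t by simp
    let ?K = "minkowski_sum ((\<lambda>b. e *\<^sub>R b) ` B) M"
    have Kc: "convex_body ?K" using cb_sum[OF cb_scale[OF assms(2)] Mc] e by simp
    have hK: "support_fun ?K = support_fun A"
    proof
      fix x
      have "support_fun ?K x = e * support_fun B x + support_fun M x"
        using sf_sum[OF cb_scale[OF assms(2)] Mc, of e x] sf_scale[OF assms(2), of e x] e by simp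
      also have "\<dots> = support_fun A x"
        using sf_scale[OF C, of "1 / (1 - t)" x] t unfolding M_def e_def hC
        by (simp add: field_simps)
      finally show "support_fun ?K x = support_fun A x" .
    qed
    have "?K = A" using sf_unique[OF Kc assms(1) hK] sf_unique[OF assms(1) Kc hK[symmetric]] by blast
    then have "is_summand ((\<lambda>b. e *\<^sub>R b) ` B) A" unfolding is_summand_def using Mc by blast
    then show False using S e by blast
  qed
qed

end
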